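(* Let $\mathbb{X}=\{T,F\}$, $n\ge1$, and for $i=1,\dots,n$ let $m_i$ be a mass function on $\mathbb{X}_i=\mathbb{X}$ with belief function $Bel_{\mathbb{X}_i}$. Let $m$ be the mass function of the disjunctive combination of the vacuous extensions of $Bel_{\mathbb{X}_1},\dots,Bel_{\mathbb{X}_n}$ to $\mathbb{X}_1\times\cdots\times\mathbb{X}_n$. Then for every tuple $(x_1,\dots,x_n)$ with $x_i\in\mathbb{X}$, \[ m\big(\{(x_1,\dots,x_n)\}^c\big)=\prod_{i=1}^n m_i(\{x_i\}^c), \] $m(\mathbb{X}_1\times\cdots\times\mathbb{X}_n)=1-\sum_{(x_1,\dots,x_n)}\prod_{i=1}^n m_i(\{x_i\}^c)$, and $m$ vanishes on all other subsets. In particular, when every $m_i$ gives positive mass to $\{T\}$, $\{F\}$ and $\mathbb{X}$, the combination has exactly $2^n+1$ focal elements: the $2^n$ complements of singletons of $\mathbb{X}_1\times\cdots\times\mathbb{X}_n$ and the whole product.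
   Context: Mass function on a finite set $\Theta$: $m:2^\Theta\to[0,1]$ with $m(\emptyset)=0$ and $\sum_A m(A)=1$; focal elements are sets of positive mass; $Bel(A)=\sum_{B\subseteq A}m(B)$. Disjunctive combination: $m_{\cup}(A)=\sum_{B\cup C=A}m_1(B)m_2(C)$, extended associatively to $n$ arguments. Complements $\{x_i\}^c$ are taken in $\mathbb{X}$ and $\{(x_1,\dots,x_n)\}^c$ in $\mathbb{X}_1\times\cdots\times\mathbb{X}_n$. Vacuous extension of $m_i$ to $\mathbb{X}_1\times\cdots\times\mathbb{X}_n$: mass $m_i(B)$ on $\mathbb{X}_1\times\cdots\times\mathbb{X}_{i-1}\times B\times\mathbb{X}_{i+1}\times\cdots\times\mathbb{X}_n$, zero elsewhere. *)

theory Defs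
  imports Complex_Main
begin

text \<open>Frame X = {T,F} is rendered as type bool (T = True, F = False).
  Tuples (x_1,...,x_n) are lists of length n; index i of the paper is list index i-1.\<close>

definition is_mass :: "'a set \<Rightarrow> ('a set \<Rightarrow> real) \<Rightarrow> bool" where
  "is_mass \<Theta> m \<longleftrightarrow> m {} = 0 \<and> (\<forall>A. 0 \<le> m A \<and> m A \<le> 1)
     \<and> (\<forall>A. \<not> A \<subseteq> \<Theta> \<longrightarrow> m A = 0) \<and> (\<Sum>A\<in>Pow \<Theta>. m A) = 1"

definition focal :: "('a set \<Rightarrow> real) \<Rightarrow> 'a set set" where
  "focal m = {A. m A > 0}"

definition bel :: "('a set \<Rightarrow> real) \<Rightarrow> 'a set \<Rightarrow> real" where
  "bel m A = (\<Sum>B\<in>Pow A. m B)"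

definition prodsp :: "nat \<Rightarrow> bool list set" where
  "prodsp n = {xs. length xs = n}"

definition cyl :: "nat \<Rightarrow> nat \<Rightarrow> bool set \<Rightarrow> bool list set" where
  "cyl n i B = {xs. length xs = n \<and> xs ! i \<in> B}"

definition vac :: "nat \<Rightarrow> nat \<Rightarrow> (bool set \<Rightarrow> real) \<Rightarrow> bool list set \<Rightarrow> real" where
  "vac n i mi A = (\<Sum>B\<in>{B. cyl n i B = A}. mi B)"

definition disj :: "'a set \<Rightarrow> ('a set \<Rightarrow> real) \<Rightarrow> ('a set \<Rightarrow> real) \<Rightarrow> 'a set \<Rightarrow> real" where
  "disj \<Theta> m1 m2 A = (\<Sum>(B,C)\<in>{(B,C). B \<in> Pow \<Theta> \<and> C \<in> Pow \<Theta> \<and> B \<union> C = A}. m1 B * m2 C)"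

primrec disjN :: "'a set \<Rightarrow> (nat \<Rightarrow> 'a set \<Rightarrow> real) \<Rightarrow> nat \<Rightarrow> 'a set \<Rightarrow> real" where
  "disjN \<Theta> ms 0 = ms 0"
| "disjN \<Theta> ms (Suc k) = disj \<Theta> (disjN \<Theta> ms k) (ms (Suc k))"

end

theory Submission
  imports Defs
begin

lemma UNIV_boolset: "(UNIV :: bool set set) = {{}, {True}, {False}, UNIV}"
  by (simp add: Pow_UNIV[symmetric] UNIV_bool Pow_insert insert_commute)

lemma sum_boolset: "(\<Sum>S\<in>(UNIV :: bool set set). f S) = f {} + f {True} + f {False} + f UNIV"
  by (simp add: UNIV_boolset UNIV_bool add.assoc)

lemma prodsp_alt: "prodsp n = {xs. set xs \<subseteq> UNIV \<and> length xs = n}"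
  by (simp add: prodsp_def)

lemma finite_prodsp[simp]: "finite (prodsp n)"
  unfolding prodsp_alt by (rule finite_lists_length_eq) simp

lemma card_prodsp: "card (prodsp n) = 2 ^ n"
  using card_lists_length_eq[of "UNIV::bool set" n] by (simp add: prodsp_def)

lemma cyl_inj: assumes "k < n" "cyl n k S = cyl n k S'" shows "S = S'"
proof -
  have "\<And>b. b \<in> S \<longleftrightarrow> replicate n b \<in> cyl n k S"
    using assms(1) by (simp add: cyl_def)
  moreover have "\<And>b. b \<in> S' \<longleftrightarrow> replicate n b \<in> cyl n k S'"
    using assms(1) by (simp add: cyl_def)
  ultimately show ?thesis using assms(2) by blast
qed

lemma cyl_sub: "cyl n k S \<subseteq> prodsp n" by (auto simp: cyl_def prodsp_def)
lemma cyl_UNIV: "cyl n k UNIV = prodsp n" by (auto simp: cyl_def prodsp_def)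

lemma vac_cyl: assumes "k < n" shows "vac n k mi (cyl n k S) = mi S"
proof -
  have "{B. cyl n k B = cyl n k S} = {S}" using cyl_inj[OF assms] by blast
  thus ?thesis by (simp add: vac_def)
qed

lemma vac_other: assumes "A \<notin> range (cyl n k)" shows "vac n k mi A = 0"
proof -
  have "{B. cyl n k B = A} = {}" using assms by blast
  thus ?thesis by (simp add: vac_def)
qed

lemma sum_vac: assumes "k < n"
  shows "(\<Sum>C\<in>Pow (prodsp n). vac n k mi C * g C) = (\<Sum>S\<in>UNIV. mi S * g (cyl n k S))"
proof -
  have "(\<Sum>C\<in>Pow (prodsp n). vac n k mi C * g C) = (\<Sum>C\<in>range (cyl n k). vac n k mi C * g C)"
    by (rule sum.mono_neutral_right) (auto simp: vac_other intro: cyl_sub[THEN subsetD])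
  also have "\<dots> = (\<Sum>S\<in>UNIV. vac n k mi (cyl n k S) * g (cyl n k S))"
    by (subst sum.reindex) (auto intro!: injI cyl_inj[OF assms])
  also have "\<dots> = (\<Sum>S\<in>UNIV. mi S * g (cyl n k S))" by (simp add: vac_cyl[OF assms])
  finally show ?thesis .
qed

lemma disj_alt: assumes "finite \<Theta>"
  shows "disj \<Theta> m1 m2 A = (\<Sum>B\<in>Pow \<Theta>. \<Sum>C\<in>Pow \<Theta>. if B \<union> C = A then m1 B * m2 C else 0)"
proof -
  have "{(B,C). B \<in> Pow \<Theta> \<and> C \<in> Pow \<Theta> \<and> B \<union> C = A} = {p \<in> Pow \<Theta> \<times> Pow \<Theta>. fst p \<union> snd p = A}"
    by auto
  hence "disj \<Theta> m1 m2 A = (\<Sum>p\<in>Pow \<Theta> \<times> Pow \<Theta>. if fst p \<union> snd p = A then m1 (fst p) * m2 (snd p) else 0)"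
    unfolding disj_def using assms by (simp add: sum.inter_filter case_prod_beta)
  also have "\<dots> = (\<Sum>B\<in>Pow \<Theta>. \<Sum>C\<in>Pow \<Theta>. if B \<union> C = A then m1 B * m2 C else 0)"
    by (rule sum.cartesian_product[symmetric, unfolded split_def])
  finally show ?thesis .
qed

lemma lists_Suc: "{zs::'a list. length zs = Suc k} = (\<lambda>(ys,b). ys @ [b]) ` ({ys. length ys = k} \<times> UNIV)"
proof (rule set_eqI, rule iffI)
  fix zs :: "'a list" assume "zs \<in> {zs. length zs = Suc k}"
  hence "zs \<noteq> []" "length (butlast zs) = k" by auto
  hence "zs = (\<lambda>(ys,b). ys @ [b]) (butlast zs, last zs)" by simp
  thus "zs \<in> (\<lambda>(ys,b). ys @ [b]) ` ({ys. length ys = k} \<times> UNIV)"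
    using \<open>length (butlast zs) = k\<close> by blast
qed auto

lemma sum_lists_Suc:
  "(\<Sum>zs\<in>{zs. length zs = Suc k}. f zs) = (\<Sum>ys\<in>{ys. length ys = k}. f (ys @ [True]) + f (ys @ [False]))"
proof -
  have fin: "finite {ys::bool list. length ys = k}"
    using finite_lists_length_eq[of "UNIV::bool set" k] by simp
  have "(\<Sum>zs\<in>{zs. length zs = Suc k}. f zs) = (\<Sum>p\<in>{ys. length ys = k} \<times> UNIV. f ((\<lambda>(ys,b). ys @ [b]) p))"
    unfolding lists_Suc by (subst sum.reindex) (auto intro!: inj_onI)
  also have "\<dots> = (\<Sum>ys\<in>{ys. length ys = k}. \<Sum>b\<in>UNIV. f (ys @ [b]))"
    by (simp add: sum.cartesian_product case_prod_unfold)
  also have "\<dots> = (\<Sum>ys\<in>{ys. length ys = k}. f (ys @ [True]) + f (ys @ [False]))"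
    by (simp add: UNIV_bool add.commute)
  finally show ?thesis .
qed

definition Pk :: "nat \<Rightarrow> nat \<Rightarrow> bool list \<Rightarrow> bool list set" where
  "Pk n k ys = {xs \<in> prodsp n. take k xs = ys}"

definition wt :: "(nat \<Rightarrow> bool set \<Rightarrow> real) \<Rightarrow> nat \<Rightarrow> bool list \<Rightarrow> real" where
  "wt M k ys = (\<Prod>i<k. M i (- {ys ! i}))"

definition good :: "nat \<Rightarrow> nat \<Rightarrow> (nat \<Rightarrow> bool set \<Rightarrow> real) \<Rightarrow> (bool list set \<Rightarrow> real) \<Rightarrow> bool" where
  "good n k M D \<longleftrightarrow> (\<forall>ys. length ys = k \<longrightarrow> D (prodsp n - Pk n k ys) = wt M k ys)
     \<and> D (prodsp n) = 1 - (\<Sum>ys\<in>{ys. length ys = k}. wt M k ys)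
     \<and> (\<forall>A. A \<noteq> prodsp n \<and> (\<forall>ys. length ys = k \<longrightarrow> A \<noteq> prodsp n - Pk n k ys) \<longrightarrow> D A = 0)"

lemma Pk_sub: "Pk n k ys \<subseteq> prodsp n" by (auto simp: Pk_def)

lemma Pk_ne: assumes "length ys = k" "k \<le> n" shows "ys @ replicate (n-k) False \<in> Pk n k ys"
  using assms by (simp add: Pk_def prodsp_def)

lemma Pk_inj: assumes "length ys = k" "length zs = k" "k \<le> n"
  "prodsp n - Pk n k ys = prodsp n - Pk n k zs" shows "ys = zs"
proof -
  have "Pk n k ys = Pk n k zs" using assms(4) Pk_sub by blast
  thus ?thesis using Pk_ne[OF assms(1,3)] by (auto simp: Pk_def)
qed

lemma Pk_neq: assumes "length ys = k" "k \<le> n" shows "prodsp n - Pk n k ys \<noteq> prodsp n"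
  using Pk_ne[OF assms] Pk_sub by blast

lemma Pk_union: assumes "length ys = k" "k < n"
  shows "(prodsp n - Pk n k ys) \<union> cyl n k {b} = prodsp n - Pk n (Suc k) (ys @ [\<not> b])"
proof -
  have "\<And>xs. length xs = n \<Longrightarrow> take (Suc k) xs = ys @ [\<not> b] \<longleftrightarrow> take k xs = ys \<and> xs ! k = (\<not> b)"
    using assms by (auto simp: take_Suc_conv_app_nth)
  thus ?thesis by (auto simp: Pk_def prodsp_def cyl_def)
qed

lemma wt_Suc: assumes "length ys = k" shows "wt M (Suc k) (ys @ [b]) = wt M k ys * M k (- {b})"
  using assms by (simp add: wt_def nth_append)

lemma sum_good: assumes "good n k M D" "k \<le> n"
  shows "(\<Sum>B\<in>Pow (prodsp n). D B * h B) =
    (\<Sum>ys\<in>{ys. length ys = k}. wt M k ys * h (prodsp n - Pk n k ys)) + D (prodsp n) * h (prodsp n)"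
proof -
  let ?T = "insert (prodsp n) ((\<lambda>ys. prodsp n - Pk n k ys) ` {ys. length ys = k})"
  have fin: "finite {ys::bool list. length ys = k}"
    using finite_lists_length_eq[of "UNIV::bool set" k] by simp
  have "(\<Sum>B\<in>Pow (prodsp n). D B * h B) = (\<Sum>B\<in>?T. D B * h B)"
    by (rule sum.mono_neutral_right) (use assms(1) in \<open>auto simp: good_def\<close>)
  also have "\<dots> = D (prodsp n) * h (prodsp n) + (\<Sum>B\<in>(\<lambda>ys. prodsp n - Pk n k ys) ` {ys. length ys = k}. D B * h B)"
    by (rule sum.insert) (use fin Pk_neq[OF _ assms(2)] in auto)
  also have "(\<Sum>B\<in>(\<lambda>ys. prodsp n - Pk n k ys) ` {ys. length ys = k}. D B * h B)
      = (\<Sum>ys\<in>{ys. length ys = k}. D (prodsp n - Pk n k ys) * h (prodsp n - Pk n k ys))"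
    by (subst sum.reindex) (auto intro!: inj_onI Pk_inj[OF _ _ assms(2)])
  also have "\<dots> = (\<Sum>ys\<in>{ys. length ys = k}. wt M k ys * h (prodsp n - Pk n k ys))"
    using assms(1) by (simp add: good_def)
  finally show ?thesis by simp
qed

lemma mass_facts: assumes "is_mass (UNIV :: bool set) Mi"
  shows "Mi {} = 0" "Mi {True} + Mi {False} + Mi UNIV = 1" "\<And>A. 0 \<le> Mi A"
  using assms by (auto simp: is_mass_def sum_boolset)

lemma compl_single: "- {b} = {\<not> b}" by auto

lemma sum_wt: "(\<Sum>ys\<in>{ys. length ys = k}. wt M k ys) = (\<Prod>i<k. M i {True} + M i {False})"
proof (induction k)
  case 0
  have "{ys::bool list. length ys = 0} = {[]}" by auto
  thus ?case by (simp add: wt_def)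
next
  case (Suc k)
  have "(\<Sum>ys\<in>{ys. length ys = Suc k}. wt M (Suc k) ys)
     = (\<Sum>ys\<in>{ys. length ys = k}. wt M k ys * (M k {True} + M k {False}))"
    unfolding sum_lists_Suc by (rule sum.cong) (auto simp: wt_Suc algebra_simps compl_single)
  also have "\<dots> = (\<Sum>ys\<in>{ys. length ys = k}. wt M k ys) * (M k {True} + M k {False})"
    by (simp add: sum_distrib_right)
  finally show ?case using Suc by simp
qed

lemma step_formula:
  assumes g: "good n j M D" and jn: "j < n" and mass: "is_mass (UNIV :: bool set) (M j)"
  shows "disj (prodsp n) D (vac n j (M j)) A =
    (\<Sum>ys\<in>{ys. length ys = j}. wt M j ys *
        (M j {True} * of_bool (prodsp n - Pk n (Suc j) (ys @ [False]) = A)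
       + M j {False} * of_bool (prodsp n - Pk n (Suc j) (ys @ [True]) = A)
       + M j UNIV * of_bool (prodsp n = A)))
    + D (prodsp n) * of_bool (prodsp n = A)"
proof -
  let ?\<Theta> = "prodsp n"
  let ?h = "\<lambda>B. \<Sum>S\<in>UNIV. M j S * of_bool (B \<union> cyl n j S = A)"
  have mf: "M j {} = 0" "M j {True} + M j {False} + M j UNIV = 1"
    using mass_facts[OF mass] by auto
  have "disj ?\<Theta> D (vac n j (M j)) A =
      (\<Sum>B\<in>Pow ?\<Theta>. \<Sum>C\<in>Pow ?\<Theta>. if B \<union> C = A then D B * vac n j (M j) C else 0)"
    by (simp add: disj_alt)
  also have "\<dots> = (\<Sum>B\<in>Pow ?\<Theta>. D B * (\<Sum>C\<in>Pow ?\<Theta>. vac n j (M j) C * of_bool (B \<union> C = A)))"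
    by (rule sum.cong[OF refl], subst sum_distrib_left, rule sum.cong[OF refl], simp)
  also have "\<dots> = (\<Sum>B\<in>Pow ?\<Theta>. D B * ?h B)"
    by (simp add: sum_vac[OF jn])
  also have "\<dots> = (\<Sum>ys\<in>{ys. length ys = j}. wt M j ys * ?h (?\<Theta> - Pk n j ys)) + D ?\<Theta> * ?h ?\<Theta>"
    by (rule sum_good[OF g]) (use jn in simp)
  also have "?h ?\<Theta> = of_bool (?\<Theta> = A)"
  proof -
    have "?h ?\<Theta> = (\<Sum>S\<in>UNIV. M j S) * of_bool (?\<Theta> = A)"
      using cyl_sub[of n j] by (simp add: sum_distrib_right Un_absorb2)
    thus ?thesis using mf by (simp add: sum_boolset)
  qed
  also have "(\<Sum>ys\<in>{ys. length ys = j}. wt M j ys * ?h (?\<Theta> - Pk n j ys)) =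
    (\<Sum>ys\<in>{ys. length ys = j}. wt M j ys *
        (M j {True} * of_bool (prodsp n - Pk n (Suc j) (ys @ [False]) = A)
       + M j {False} * of_bool (prodsp n - Pk n (Suc j) (ys @ [True]) = A)
       + M j UNIV * of_bool (prodsp n = A)))"
  proof (rule sum.cong)
    fix ys assume "ys \<in> {ys::bool list. length ys = j}"
    hence l: "length ys = j" by simp
    have u: "?\<Theta> - Pk n j ys \<union> cyl n j UNIV = ?\<Theta>" by (auto simp: cyl_UNIV)
    show "wt M j ys * ?h (?\<Theta> - Pk n j ys) = wt M j ys *
        (M j {True} * of_bool (prodsp n - Pk n (Suc j) (ys @ [False]) = A)
       + M j {False} * of_bool (prodsp n - Pk n (Suc j) (ys @ [True]) = A)
       + M j UNIV * of_bool (prodsp n = A))"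
      using mf(1) by (simp only: sum_boolset Pk_union[OF l jn] u) simp
  qed simp
  finally show ?thesis .
qed

lemma step_good:
  assumes g: "good n j M D" and jn: "j < n" and mass: "is_mass (UNIV :: bool set) (M j)"
  shows "good n (Suc j) M (disj (prodsp n) D (vac n j (M j)))"
proof -
  let ?\<Theta> = "prodsp n"
  let ?D = "disj (prodsp n) D (vac n j (M j))"
  note F = step_formula[OF g jn mass]
  have mf: "M j {} = 0" "M j {True} + M j {False} + M j UNIV = 1"
    using mass_facts[OF mass] by auto
  have sj: "Suc j \<le> n" using jn by simp
  have fin: "finite {ys::bool list. length ys = j}"
    using finite_lists_length_eq[of "UNIV::bool set" j] by simp
  have neq: "\<And>ys b. length ys = j \<Longrightarrow> ?\<Theta> - Pk n (Suc j) (ys @ [b]) \<noteq> ?\<Theta>"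
    using Pk_neq[OF _ sj] by simp
  have a: "?D (?\<Theta> - Pk n (Suc j) zs) = wt M (Suc j) zs" if lz: "length zs = Suc j" for zs
  proof -
    obtain ys0 b0 where z: "zs = ys0 @ [b0]" and l0: "length ys0 = j"
    proof
      show "zs = butlast zs @ [last zs]" using lz by (metis append_butlast_last_id list.size(3) nat.distinct(1))
    qed (use lz in simp)
    have eqv: "(?\<Theta> - Pk n (Suc j) (ys @ [b]) = ?\<Theta> - Pk n (Suc j) zs) \<longleftrightarrow> ys = ys0 \<and> b = b0"
      if "length ys = j" for ys b
      using Pk_inj[OF _ lz sj, of "ys @ [b]"] that z by auto
    have "?D (?\<Theta> - Pk n (Suc j) zs) =
       (\<Sum>ys\<in>{ys. length ys = j}. if ys = ys0 then wt M j ys * M j (- {b0}) else 0)"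
      unfolding F
      by (rule trans[OF _ add_0_right], rule arg_cong2[where f="(+)"], rule sum.cong[OF refl])
         (use eqv neq[OF l0, of b0] z in \<open>auto simp: compl_single\<close>)
    also have "\<dots> = wt M (Suc j) zs" using fin l0 z by (simp add: wt_Suc)
    finally show ?thesis .
  qed
  have b: "?D ?\<Theta> = 1 - (\<Sum>zs\<in>{zs. length zs = Suc j}. wt M (Suc j) zs)"
  proof -
    have "?D ?\<Theta> = (\<Sum>ys\<in>{ys. length ys = j}. wt M j ys * M j UNIV) + D ?\<Theta>"
      unfolding F by (rule trans[OF _ arg_cong2[where f="(+)"]], rule refl, rule sum.cong[OF refl])
         (use neq in auto)
    also have "\<dots> = (\<Sum>ys\<in>{ys. length ys = j}. wt M j ys) * M j UNIV + 1 - (\<Sum>ys\<in>{ys. length ys = j}. wt M j ys)"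
      using g by (simp add: good_def sum_distrib_right)
    also have "(\<Sum>zs\<in>{zs. length zs = Suc j}. wt M (Suc j) zs) = (\<Sum>ys\<in>{ys. length ys = j}. wt M j ys) * (M j {True} + M j {False})"
      unfolding sum_lists_Suc by (simp add: wt_Suc compl_single sum_distrib_right sum_distrib_left algebra_simps sum.distrib)
    moreover have U: "M j UNIV = 1 - M j {True} - M j {False}" using mf(2) by simp
    ultimately show ?thesis by (simp add: U algebra_simps)
  qed
  have c: "?D A = 0" if "A \<noteq> ?\<Theta>" "\<forall>zs. length zs = Suc j \<longrightarrow> A \<noteq> ?\<Theta> - Pk n (Suc j) zs" for A
  proof -
    have h: "\<And>ys b. length ys = j \<Longrightarrow> (?\<Theta> - Pk n (Suc j) (ys @ [b]) = A) = False"
      using that(2) by (metis length_append_singleton)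
    have h2: "(?\<Theta> = A) = False" using that(1) by auto
    show ?thesis unfolding F h2 by (simp, intro sum.neutral ballI, simp add: h)
  qed
  show ?thesis unfolding good_def using a b c by blast
qed

lemma base_good:
  assumes n: "0 < n" and mass: "is_mass (UNIV :: bool set) (M 0)"
  shows "good n 1 M (vac n 0 (M 0))"
proof -
  let ?\<Theta> = "prodsp n"
  have mf: "M 0 {} = 0" "M 0 {True} + M 0 {False} + M 0 UNIV = 1"
    using mass_facts[OF mass] by auto
  have tk: "take 1 xs = [b] \<longleftrightarrow> xs ! 0 = b" if "length xs = n" for xs :: "bool list" and b
    using n that by (cases xs) auto
  have P1: "?\<Theta> - Pk n 1 [b] = cyl n 0 {\<not> b}" for b
    using tk by (auto simp: Pk_def prodsp_def cyl_def)
  have l1: "length ys = 1 \<longleftrightarrow> (\<exists>b. ys = [b])" for ys :: "bool list"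
    by (cases ys) auto
  have L1: "{ys::bool list. length ys = 1} = {[True], [False]}"
    by (rule set_eqI, simp only: mem_Collect_eq l1) auto
  have a: "vac n 0 (M 0) (?\<Theta> - Pk n 1 ys) = wt M 1 ys" if "length ys = 1" for ys
  proof -
    obtain b where "ys = [b]" using \<open>length ys = 1\<close> l1[of ys] by auto
    thus ?thesis using n P1[of b] by (simp add: vac_cyl wt_def compl_single)
  qed
  have b: "vac n 0 (M 0) ?\<Theta> = 1 - (\<Sum>ys\<in>{ys. length ys = 1}. wt M 1 ys)"
    using n mf vac_cyl[OF n, of "M 0" UNIV] L1 by (simp add: wt_def compl_single cyl_UNIV)
  have c: "vac n 0 (M 0) A = 0" if "A \<noteq> ?\<Theta>" "\<forall>ys. length ys = 1 \<longrightarrow> A \<noteq> ?\<Theta> - Pk n 1 ys" for A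
  proof (cases "A \<in> range (cyl n 0)")
    case True
    then obtain S where S: "A = cyl n 0 S" by blast
    have "S \<noteq> UNIV" using that(1) S cyl_UNIV by metis
    moreover have "S \<noteq> {b}" for b using that(2)[rule_format, of "[\<not> b]"] S P1[of "\<not> b"] by auto
    moreover have "S \<in> {{}, {True}, {False}, UNIV}" by (simp only: UNIV_boolset[symmetric]) simp
    ultimately have "S = {}" by auto
    thus ?thesis using S n mf by (simp add: vac_cyl)
  next
    case False thus ?thesis by (rule vac_other)
  qed
  show ?thesis unfolding good_def using a b c by blast
qed

lemma all_good:
  assumes "Suc k \<le> n" and "\<forall>i<n. is_mass (UNIV :: bool set) (M i)"
  shows "good n (Suc k) M (disjN (prodsp n) (\<lambda>i. vac n i (M i)) k)"
  using assms(1)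
proof (induction k)
  case 0 thus ?case using base_good assms(2) by simp
next
  case (Suc k)
  thus ?case using step_good[of n "Suc k" M] assms(2) by simp
qed

lemma prod_lt1: fixes a :: "nat \<Rightarrow> real" shows "(\<forall>i<n. 0 \<le> a i \<and> a i < (1::real)) \<Longrightarrow> 1 \<le> n \<Longrightarrow> (\<Prod>i<n. a i) < 1"
proof (induction n)
  case 0 thus ?case by simp
next
  case (Suc n)
  show ?case
  proof (cases "n = 0")
    case True thus ?thesis using Suc by simp
  next
    case False
    hence "(\<Prod>i<n. a i) < 1" using Suc by simp
    moreover have "0 \<le> (\<Prod>i<n. a i)" using Suc.prems by (auto intro: prod_nonneg)
    moreover have "0 \<le> a n" "a n < 1" using Suc.prems by auto
    ultimately have "(\<Prod>i<n. a i) * a n \<le> (\<Prod>i<n. a i) * 1"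
      by (intro mult_left_mono) auto
    hence "(\<Prod>i<n. a i) * a n < 1" using \<open>(\<Prod>i<n. a i) < 1\<close> by simp
    thus ?thesis by simp
  qed
qed

lemma Pk_n: assumes "xs \<in> prodsp n" shows "Pk n n xs = {xs}"
  using assms by (auto simp: Pk_def prodsp_def)

theorem lemma2:
  fixes n :: nat and M :: "nat \<Rightarrow> bool set \<Rightarrow> real" and m :: "bool list set \<Rightarrow> real"
  assumes "n \<ge> 1"
    and "\<forall>i<n. is_mass (UNIV :: bool set) (M i)"
    and "m = disjN (prodsp n) (\<lambda>i. vac n i (M i)) (n - 1)"
  shows "(\<forall>xs\<in>prodsp n. m (prodsp n - {xs}) = (\<Prod>i<n. M i (- {xs ! i})))
    \<and> m (prodsp n) = 1 - (\<Sum>xs\<in>prodsp n. \<Prod>i<n. M i (- {xs ! i}))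
    \<and> (\<forall>A. A \<noteq> prodsp n \<and> (\<forall>xs\<in>prodsp n. A \<noteq> prodsp n - {xs}) \<longrightarrow> m A = 0)
    \<and> ((\<forall>i<n. M i {True} > 0 \<and> M i {False} > 0 \<and> M i UNIV > 0) \<longrightarrow>
         focal m = insert (prodsp n) ((\<lambda>xs. prodsp n - {xs}) ` prodsp n)
         \<and> card (focal m) = 2 ^ n + 1)"
proof -
  let ?\<Theta> = "prodsp n"
  have sn: "Suc (n - 1) = n" using assms(1) by simp
  have g: "good n n M m"
    using all_good[of "n - 1" n M] assms sn by simp
  have L: "{ys::bool list. length ys = n} = ?\<Theta>" by (simp add: prodsp_def)
  have c1: "\<forall>xs\<in>?\<Theta>. m (?\<Theta> - {xs}) = (\<Prod>i<n. M i (- {xs ! i}))"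
    using g by (auto simp: good_def Pk_n wt_def prodsp_def)
  have c2: "m ?\<Theta> = 1 - (\<Sum>xs\<in>?\<Theta>. \<Prod>i<n. M i (- {xs ! i}))"
    using g L by (simp add: good_def wt_def)
  have c3: "\<forall>A. A \<noteq> ?\<Theta> \<and> (\<forall>xs\<in>?\<Theta>. A \<noteq> ?\<Theta> - {xs}) \<longrightarrow> m A = 0"
  proof (intro allI impI)
    fix A assume A: "A \<noteq> ?\<Theta> \<and> (\<forall>xs\<in>?\<Theta>. A \<noteq> ?\<Theta> - {xs})"
    hence "\<forall>ys. length ys = n \<longrightarrow> A \<noteq> ?\<Theta> - Pk n n ys"
      by (auto simp: Pk_n prodsp_def)
    thus "m A = 0" using g A by (simp add: good_def)
  qed
  have c4: "focal m = insert ?\<Theta> ((\<lambda>xs. ?\<Theta> - {xs}) ` ?\<Theta>) \<and> card (focal m) = 2 ^ n + 1"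
    if pos: "\<forall>i<n. M i {True} > 0 \<and> M i {False} > 0 \<and> M i UNIV > 0"
  proof -
    have mf: "\<And>i. i < n \<Longrightarrow> M i {True} + M i {False} + M i UNIV = 1"
      using mass_facts assms(2) by blast
    have p1: "m (?\<Theta> - {xs}) > 0" if "xs \<in> ?\<Theta>" for xs
    proof -
      have "\<And>i. i < n \<Longrightarrow> M i (- {xs ! i}) > 0"
        using pos by (auto simp: compl_single) (metis (full_types))
      hence "(\<Prod>i<n. M i (- {xs ! i})) > 0" by (intro prod_pos) simp
      thus ?thesis using c1 that by simp
    qed
    have "(\<Sum>xs\<in>?\<Theta>. \<Prod>i<n. M i (- {xs ! i})) = (\<Prod>i<n. M i {True} + M i {False})"
      using sum_wt[of M n] L by (simp add: wt_def)
    also have "\<dots> < 1"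
    proof (rule prod_lt1)
      show "\<forall>i<n. 0 \<le> M i {True} + M i {False} \<and> M i {True} + M i {False} < 1"
        using pos mf by (smt (verit))
    qed (use assms(1) in simp)
    finally have p2: "m ?\<Theta> > 0" using c2 by simp
    have neq: "?\<Theta> - {xs} \<noteq> ?\<Theta>" if "xs \<in> ?\<Theta>" for xs using that by blast
    have F: "focal m = insert ?\<Theta> ((\<lambda>xs. ?\<Theta> - {xs}) ` ?\<Theta>)"
    proof
      show "focal m \<subseteq> insert ?\<Theta> ((\<lambda>xs. ?\<Theta> - {xs}) ` ?\<Theta>)"
        using c3 by (auto simp: focal_def)
      show "insert ?\<Theta> ((\<lambda>xs. ?\<Theta> - {xs}) ` ?\<Theta>) \<subseteq> focal m"
        using p1 p2 by (auto simp: focal_def)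
    qed
    have inj: "inj_on (\<lambda>xs. ?\<Theta> - {xs}) ?\<Theta>"
      by (rule inj_onI) blast
    have "card (insert ?\<Theta> ((\<lambda>xs. ?\<Theta> - {xs}) ` ?\<Theta>)) = Suc (card ((\<lambda>xs. ?\<Theta> - {xs}) ` ?\<Theta>))"
      by (rule card_insert_disjoint) (use neq in auto)
    also have "\<dots> = 2 ^ n + 1" using card_image[OF inj] card_prodsp by simp
    finally show ?thesis using F by simp
  qed
  show ?thesis using c1 c2 c3 c4 by blast
qed

end
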